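(* There exist $\delta_1>0$ and $C_1>0$ such that for every $(\ell,\xi)\in[-\delta_1,\delta_1]\times[-\delta_1,\delta_1]$, $|\lambda^+_{0,\ell,\xi}-\lambda^+_{-1,\ell,\xi}|\ge C_1|(\ell,\xi)|$ and $|\lambda^-_{0,\ell,\xi}-\lambda^-_{1,\ell,\xi}|\ge C_1|(\ell,\xi)|$, and for every $n\in\mathbb Z$ and sign $\#\in\{+,-\}$ with $(n,\#)\notin\{(0,+),(0,-),(1,-),(-1,+)\}$, $|\lambda^\#_{n,\ell,\xi}|\ge C_1$.
   Context: Fix $\kappa>0$ and set $\mu_0:=\kappa/\tanh(\kappa)$. Let $F:\mathbb R\to\mathbb R$ be the odd analytic function with $F(r)=\sqrt{r\tanh r}$ for $r\ge0$. For $n\in\mathbb Z$ and $(\ell,\xi)\in\mathbb R^2$ set $|n\kappa|_{\ell,\xi}:=\sqrt{(n\kappa+\xi)^2+\ell^2}$ and $\lambda^\pm_{n,\ell,\xi}:=i\big(n\kappa+\xi\pm\sqrt{\mu_0}\,F(|n\kappa|_{\ell,\xi})\big)$; these are the eigenvalues of $\begin{pmatrix} i(n\kappa+\xi) & F(|n\kappa|_{\ell,\xi})^2\\ -\mu_0 & i(n\kappa+\xi)\end{pmatrix}$. Here $|(\ell,\xi)|=\sqrt{\ell^2+\xi^2}$. *)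

theory Defs
  imports "HOL-Analysis.Analysis"
begin

definition mu0 :: "real \<Rightarrow> real" where
  "mu0 \<kappa> = \<kappa> / tanh \<kappa>"

definition Fdisp :: "real \<Rightarrow> real" where
  "Fdisp r = (if r \<ge> 0 then sqrt (r * tanh r) else - sqrt ((- r) * tanh (- r)))"

definition nkabs :: "real \<Rightarrow> int \<Rightarrow> real \<Rightarrow> real \<Rightarrow> real" where
  "nkabs \<kappa> n l \<xi> = sqrt ((of_int n * \<kappa> + \<xi>)\<^sup>2 + l\<^sup>2)"

text \<open>lam \<kappa> s n l \<xi>: s = True for the sign +, s = False for the sign -.\<close>
definition lam :: "real \<Rightarrow> bool \<Rightarrow> int \<Rightarrow> real \<Rightarrow> real \<Rightarrow> complex" where
  "lam \<kappa> s n l \<xi> = \<i> * complex_of_real (of_int n * \<kappa> + \<xi> +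
      (if s then 1 else -1) * sqrt (mu0 \<kappa>) * Fdisp (nkabs \<kappa> n l \<xi>))"

end

theory Submission
  imports Defs
begin


lemma tanh_le_self: fixes x::real assumes "0 \<le> x" shows "tanh x \<le> x"
proof -
  have "(\<lambda>x. x - tanh x) 0 \<le> (\<lambda>x. x - tanh x) x"
  proof (rule DERIV_nonneg_imp_nondecreasing[OF assms])
    fix y :: real
    show "\<exists>d. ((\<lambda>x. x - tanh x) has_real_derivative d) (at y) \<and> d \<ge> 0"
      by (rule exI[of _ "1 - (1 - tanh y ^ 2)"]) (auto intro!: derivative_eq_intros)
  qed
  thus ?thesis by simp
qed

lemma sinh_ge_self: fixes x::real assumes "0 \<le> x" shows "x \<le> sinh x"
proof -
  have "(\<lambda>x. sinh x - x) 0 \<le> (\<lambda>x. sinh x - x) x"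
  proof (rule DERIV_nonneg_imp_nondecreasing[OF assms])
    fix y :: real
    show "\<exists>d. ((\<lambda>x. sinh x - x) has_real_derivative d) (at y) \<and> d \<ge> 0"
      by (rule exI[of _ "cosh y - 1"]) (auto intro!: derivative_eq_intros simp: cosh_real_ge_1)
  qed
  thus ?thesis by simp
qed

lemma tanh_lower: fixes x::real assumes "0 \<le> x" shows "x / (1 + x) \<le> tanh x"
proof -
  define e where "e = exp (-2*x)"
  have e0: "e > 0" by (simp add: e_def)
  have "e * exp (2*x) = 1" by (simp add: e_def flip: exp_add)
  moreover have "1 + 2*x \<le> exp (2*x)" using exp_ge_add_one_self by simp
  ultimately have "e * (1 + 2*x) \<le> 1" using e0 by (metis mult_left_mono less_imp_le)
  hence "x * (1 + e) \<le> (1 + x) * (1 - e)" by (simp add: algebra_simps)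
  thus ?thesis using assms e0 unfolding tanh_real_altdef e_def[symmetric]
    by (simp add: divide_simps) (simp add: algebra_simps)
qed

lemma tanh_sech: fixes y::real assumes "0 \<le> y" shows "y * (1 - tanh y ^ 2) \<le> tanh y"
proof -
  have c: "cosh y > 0" by simp
  have "1 - tanh y ^ 2 = 1 / cosh y ^ 2"
  proof -
    have "1 - tanh y ^ 2 = (cosh y ^ 2 - sinh y ^ 2) / cosh y ^ 2"
      unfolding tanh_def using c by (simp add: power_divide field_simps)
    thus ?thesis using cosh_square_eq[of y] by simp
  qed
  moreover have "y \<le> sinh y * cosh y"
    using sinh_ge_self[OF assms] cosh_real_ge_1[of y] assms
    by (metis mult_le_cancel_left1 order_trans sinh_real_nonneg_iff mult.commute mult_left_mono mult_1_right)
  ultimately have "y * (1 - tanh y ^ 2) \<le> sinh y * cosh y / cosh y ^ 2"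
    by (simp add: divide_right_mono)
  also have "\<dots> = tanh y" unfolding tanh_def using c by (simp add: power2_eq_square)
  finally show ?thesis .
qed

lemma tanh_add_bound: fixes k r::real assumes "0 \<le> k" "0 \<le> r"
  shows "tanh (k + r) \<le> tanh k + r * (1 - tanh k ^ 2)"
proof -
  define t u where "t = tanh k" "u = tanh r"
  have t: "0 \<le> t" "t < 1" using assms by (auto simp: t_u_def tanh_real_lt_1)
  have u: "0 \<le> u" "u \<le> r" using assms tanh_le_self[OF assms(2)] by (auto simp: t_u_def)
  have "tanh (k + r) = (t + u) / (1 + t * u)" by (simp add: tanh_add t_u_def)
  also have "\<dots> = t + u * (1 - t^2) / (1 + t * u)"
  proof -
    have p: "1 + t * u > 0" using t u by (simp add: add_pos_nonneg)
    have "t + u = t * (1 + t*u) + u * (1 - t^2)" by (simp add: algebra_simps power2_eq_square)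
    thus ?thesis using p by (simp add: add_divide_distrib)
  qed
  also have "u * (1 - t^2) / (1 + t * u) \<le> u * (1 - t^2)"
  proof -
    have "0 \<le> u * (1 - t^2)" using t u by (simp add: abs_square_le_1 power_le_one)
    moreover have "1 \<le> 1 + t * u" using t u by simp
    ultimately have "u * (1 - t^2) / (1 + t * u) \<le> u * (1 - t^2) / 1"
      by (intro divide_left_mono) auto
    thus ?thesis by simp
  qed
  also have "u * (1 - t^2) \<le> r * (1 - t^2)"
    using u t by (intro mult_right_mono) (auto simp: power_le_one)
  finally show ?thesis by (simp add: t_u_def)
qed


lemma ratio_strict: fixes y1 y2::real assumes "0 < y1" "y1 < y2"
  shows "y1 * tanh y2 < y2 * tanh y1"
proof -
  define d where "d = y2 - y1"
  define t u where "t = tanh y1" "u = tanh d"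
  have d: "d > 0" using assms by (simp add: d_def)
  have t: "0 < t" "t < 1" using assms by (auto simp: t_u_def tanh_real_lt_1)
  have u: "0 < u" "u \<le> d" using d tanh_le_self[of d] by (auto simp: t_u_def)
  have y2: "y2 = y1 + d" by (simp add: d_def)
  have e: "tanh y2 = (t + u) / (1 + t * u)" by (simp add: y2 tanh_add t_u_def)
  have s: "y1 * (1 - t^2) \<le> t" using tanh_sech[of y1] assms by (simp add: t_u_def)
  have "y1 * u * (1 - t^2) \<le> u * t" using s u by (metis mult.assoc mult.commute mult_left_mono less_imp_le)
  also have "\<dots> \<le> d * t" using u t by (simp add: mult_right_mono)
  also have "\<dots> < d * t * (1 + t * u)" using d t u by simp
  finally have k: "y1 * u * (1 - t^2) < d * t * (1 + t * u)" .
  have "y1 * (t + u) < y2 * t * (1 + t * u)"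
    using k unfolding y2 by (simp add: algebra_simps power2_eq_square)
  hence "y1 * (t + u) < y2 * t * (1 + t * u)" .
  moreover have p: "1 + t * u > 0" using t u by (simp add: add_pos_pos)
  ultimately have "(y1 * (t + u)) / (1 + t * u) < y2 * t"
    by (subst pos_divide_less_eq) auto
  hence "y1 * ((t + u) / (1 + t * u)) < y2 * t" by simp
  thus ?thesis unfolding e by (simp add: t_u_def)
qed


lemma exp_gt: fixes y::real assumes "y \<noteq> 0" shows "1 + y < exp y"
proof (cases "1 + y/2 \<ge> 0")
  case True
  have "(1 + y/2)^2 \<le> exp (y/2) ^ 2"
    using True exp_ge_add_one_self[of "y/2"] by (intro power_mono) auto
  also have "exp (y/2)^2 = exp y" by (simp add: power2_eq_square flip: exp_add)
  finally have "(1 + y/2)^2 \<le> exp y" .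
  moreover have "(1 + y/2)^2 = 1 + y + y^2/4" by (simp add: power2_eq_square algebra_simps)
  moreover have "y^2 > 0" using assms by simp
  ultimately show ?thesis by linarith
next
  case False hence "1 + y < 0" by simp
  thus ?thesis using exp_gt_zero[of y] by linarith
qed



definition gg :: "real \<Rightarrow> real \<Rightarrow> real" where "gg k r = sqrt (mu0 k) * Fdisp r"

lemma Fdisp_pos: "r \<ge> 0 \<Longrightarrow> Fdisp r = sqrt (r * tanh r)" by (simp add: Fdisp_def)

lemma Fdisp_nonneg: "r \<ge> 0 \<Longrightarrow> Fdisp r \<ge> 0" by (simp add: Fdisp_def)

lemma Fdisp_mono: assumes "0 \<le> a" "a \<le> b" shows "Fdisp a \<le> Fdisp b"
proof -
  have "a * tanh a \<le> b * tanh b" using assms by (intro mult_mono) auto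
  thus ?thesis using assms by (simp add: Fdisp_def)
qed

lemma mu0_pos: "k > 0 \<Longrightarrow> mu0 k > 0" by (simp add: mu0_def)

lemma gg_nonneg: "k > 0 \<Longrightarrow> r \<ge> 0 \<Longrightarrow> gg k r \<ge> 0"
  by (simp add: gg_def Fdisp_nonneg mu0_pos less_imp_le)

lemma gg_mono: "k > 0 \<Longrightarrow> 0 \<le> a \<Longrightarrow> a \<le> b \<Longrightarrow> gg k a \<le> gg k b"
  unfolding gg_def by (intro mult_left_mono Fdisp_mono) (auto simp: mu0_pos less_imp_le)

lemma m_eq: assumes "k > 0" shows "sqrt (mu0 k) = sqrt (k * tanh k) / tanh k"
proof -
  have t: "tanh k > 0" using assms by simp
  have "mu0 k = (k * tanh k) / (tanh k)^2" using t by (simp add: mu0_def power2_eq_square)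
  thus ?thesis using t by (simp add: real_sqrt_divide)
qed

lemma sqrt_concave: fixes x y :: real assumes "0 \<le> x" "0 < y"
  shows "sqrt x \<le> sqrt y + (x - y) / (2 * sqrt y)"
proof -
  define a b where "a = sqrt x" "b = sqrt y"
  have b: "b > 0" using assms by (simp add: a_b_def)
  have xy: "x = a^2" "y = b^2" using assms by (auto simp: a_b_def)
  have "2 * a * b \<le> a^2 + b^2" using sum_squares_bound[of a b] by simp
  hence "a * (2*b) \<le> b * (2*b) + (a^2 - b^2)" by (simp add: algebra_simps power2_eq_square)
  hence "a \<le> (b * (2*b) + (a^2 - b^2)) / (2*b)" using b by (simp add: le_divide_eq)
  also have "\<dots> = b + (a^2 - b^2) / (2*b)" using b by (simp add: add_divide_distrib)
  finally show ?thesis unfolding a_b_def using assms by simp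
qed

lemma key_ineq: assumes "k > 0"
  shows "k * (1 - tanh k ^ 2) + tanh k < 2 * sqrt (k * tanh k)"
proof -
  define t e where "t = tanh k" "e = exp (-2*k)"
  have e: "0 < e" by (simp add: t_e_def)
  have te: "t = (1 - e) / (1 + e)" by (simp add: t_e_def tanh_real_altdef)
  have t: "0 < t" "t < 1" using assms by (auto simp: t_e_def tanh_real_lt_1)
  have e2: "e^2 = exp (-4*k)" by (simp add: t_e_def power2_eq_square flip: exp_add)
  have h: "t*(1+e) = 1-e" using e by (simp add: te)
  have h1: "(1+t)*(1+e) = 2" using h by (simp add: algebra_simps)
  have h2: "(1-t)*(1+e) = 2*e" using h by (simp add: algebra_simps)
  have g1: "((1+t)^2*k - t) * (1+e)^2 = k*((1+t)*(1+e))^2 - (t*(1+e))*(1+e)"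
    by (simp add: algebra_simps power2_eq_square)
  have g2: "((1-t)^2*k - t) * (1+e)^2 = k*((1-t)*(1+e))^2 - (t*(1+e))*(1+e)"
    by (simp add: algebra_simps power2_eq_square)
  have ep: "(1+e)^2 > 0" using e by simp
  have "((1+t)^2*k - t) * (1+e)^2 = 4*k - (1 - e^2)"
    unfolding g1 h1 h by (simp add: algebra_simps power2_eq_square)
  hence f1: "(1+t)^2*k - t = (4*k - (1 - e^2))/(1+e)^2"
    using ep by (simp add: eq_divide_eq)
  have "((1-t)^2*k - t) * (1+e)^2 = e^2*(1+4*k) - 1"
    unfolding g2 h2 h by (simp add: algebra_simps power2_eq_square)
  hence f2: "(1-t)^2*k - t = (e^2*(1+4*k) - 1)/(1+e)^2"
    using ep by (simp add: eq_divide_eq)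
  have "1 + (-4*k) < exp (-4*k)" using assms by (intro exp_gt) simp
  hence "4*k - (1 - e^2) > 0" using e2 by simp
  hence p1: "(1+t)^2*k - t > 0" using e by (simp add: f1)
  have "1 + 4*k < exp (4*k)" using assms by (intro exp_gt) simp
  moreover have "e^2 * exp (4*k) = 1" by (simp add: e2 flip: exp_add)
  ultimately have "e^2*(1+4*k) < 1" using e
    by (metis mult_strict_left_mono zero_less_power)
  hence p2: "(1-t)^2*k - t < 0" using e by (simp add: f2 divide_neg_pos)
  define X where "X = k * (1 - t^2) + t"
  have X0: "X \<ge> 0" using t assms by (simp add: X_def power_le_one)
  have "X^2 - 4*(k*t) = ((1+t)^2*k - t) * ((1-t)^2*k - t)"
    by (simp add: X_def power2_eq_square algebra_simps)
  also have "\<dots> < 0" using p1 p2 by (simp add: mult_pos_neg)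
  finally have "X^2 < (2 * sqrt (k*t))^2" using t assms by (simp add: power_mult_distrib mult_nonneg_nonneg)
  hence "X < 2 * sqrt (k*t)" by (rule power_less_imp_less_base) (use t assms in simp)
  thus ?thesis by (simp add: X_def t_e_def)
qed



lemma sqm0: "k > 0 \<Longrightarrow> 0 \<le> sqrt (mu0 k)" using mu0_pos[of k] by simp

lemma L_up: assumes k: "k > 0" and r: "\<rho> \<ge> 0"
  shows "gg k (k + \<rho>) \<le> k + (k * (1 - tanh k ^ 2) + tanh k) / (2 * tanh k) * \<rho>
           + (1 - tanh k ^ 2) / (2 * tanh k) * \<rho>^2"
proof -
  define t where "t = tanh k"
  define h1 h0 where "h1 = (k+\<rho>) * tanh (k+\<rho>)" "h0 = k * t"
  have t: "0 < t" "t < 1" using k by (auto simp: t_def tanh_real_lt_1)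
  have h0: "h0 > 0" using t k by (simp add: h1_h0_def)
  have h1: "h1 \<ge> 0" using k r by (simp add: h1_h0_def)
  have m: "sqrt (mu0 k) = sqrt h0 / t" using m_eq[OF k] by (simp add: h1_h0_def t_def)
  have sh0: "sqrt h0 > 0" using h0 by simp
  have "gg k (k+\<rho>) = sqrt (mu0 k) * sqrt h1" using k r by (simp add: gg_def Fdisp_pos h1_h0_def)
  also have "\<dots> \<le> sqrt (mu0 k) * (sqrt h0 + (h1 - h0) / (2 * sqrt h0))"
    by (intro mult_left_mono sqrt_concave h1 h0) (simp add: mu0_pos k less_imp_le)
  also have "\<dots> = h0 / t + (h1 - h0) / (2 * t)"
    unfolding m using sh0 t h0 by (simp add: field_simps power2_eq_square)
  also have "h0 / t = k" using t by (simp add: h1_h0_def)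
  also have "h1 \<le> (k+\<rho>) * (t + \<rho> * (1 - t^2))"
    unfolding h1_h0_def t_def using k r tanh_add_bound[of k \<rho>] by (intro mult_left_mono) auto
  hence "(h1 - h0) / (2 * t) \<le> ((k+\<rho>) * (t + \<rho> * (1 - t^2)) - h0) / (2 * t)"
    using t by (intro divide_right_mono) auto
  also have "\<dots> = (k * (1 - t ^ 2) + t) / (2 * t) * \<rho> + (1 - t ^ 2) / (2 * t) * \<rho>^2"
    using t by (simp add: h1_h0_def field_simps power2_eq_square)
  finally show ?thesis by (simp add: t_def)
qed

lemma L_low: assumes k: "k > 0" and r: "\<rho> \<ge> 0"
  shows "sqrt (mu0 k) * (\<rho> * (1 - \<rho>)) \<le> gg k \<rho>"
proof -
  have a: "\<rho> * (1 - \<rho>) \<le> \<rho> / (1 + \<rho>)"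
  proof -
    have "\<rho> * (1 - \<rho>) * (1 + \<rho>) \<le> \<rho>" using r by (simp add: algebra_simps power2_eq_square)
    thus ?thesis using r by (simp add: le_divide_eq)
  qed
  have "(\<rho> / (1 + \<rho>))^2 \<le> \<rho> * (\<rho> / (1 + \<rho>))"
  proof -
    have "\<rho> / (1 + \<rho>) \<le> \<rho>" using r by (simp add: divide_le_eq algebra_simps)
    hence "(\<rho> / (1 + \<rho>)) * (\<rho> / (1 + \<rho>)) \<le> \<rho> * (\<rho> / (1 + \<rho>))"
      using r by (intro mult_right_mono) auto
    thus ?thesis by (simp add: power2_eq_square)
  qed
  also have "\<dots> \<le> \<rho> * tanh \<rho>" using tanh_lower[OF r] r by (intro mult_left_mono) auto
  finally have "\<rho> / (1 + \<rho>) \<le> sqrt (\<rho> * tanh \<rho>)"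
    using r by (simp add: real_le_rsqrt)
  hence "\<rho> * (1 - \<rho>) \<le> Fdisp \<rho>" using a r by (simp add: Fdisp_pos)
  thus ?thesis unfolding gg_def by (intro mult_left_mono sqm0 k)
qed

lemma L_ratio: assumes k: "k > 0"
  defines "\<theta> \<equiv> sqrt (mu0 k) * sqrt (tanh (3*k/2) / (3*k/2))"
  shows "0 \<le> \<theta>" "\<theta> < 1" "\<And>r. r \<ge> 3*k/2 \<Longrightarrow> gg k r \<le> \<theta> * r"
proof -
  define y0 where "y0 = 3*k/2"
  define t where "t = tanh k"
  have y0: "y0 > k" using k by (simp add: y0_def)
  have t: "t > 0" using k by (simp add: t_def)
  have ty0: "tanh y0 > 0" using y0 k by simp
  show "0 \<le> \<theta>" using k ty0 mu0_pos[OF k] unfolding \<theta>_def y0_def by simp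
  have rs: "k * tanh y0 < y0 * t" using ratio_strict[OF k y0] by (simp add: t_def)
  have "\<theta>^2 = (k / t) * (tanh y0 / y0)" using k ty0 y0
    by (simp add: \<theta>_def y0_def t_def mu0_def power_mult_distrib)
  also have "\<dots> = (k * tanh y0) / (y0 * t)" by simp
  also have "\<dots> < 1" using rs t y0 k by simp
  finally have "\<theta>^2 < 1" .
  thus "\<theta> < 1" using \<open>0 \<le> \<theta>\<close> by (simp add: power_less_one_iff abs_square_less_1)
  fix r assume r: "r \<ge> 3*k/2"
  hence r0: "r \<ge> y0" "r > 0" using k by (auto simp: y0_def)
  have "y0 * tanh r \<le> r * tanh y0"
  proof (cases "r = y0")
    case False thus ?thesis using ratio_strict[of y0 r] r0 y0 k by simp
  qed simp
  hence "tanh r \<le> r * (tanh y0 / y0)" using y0 k by (simp add: field_simps)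
  hence "r * tanh r \<le> r * (r * (tanh y0 / y0))" using r0
    by (intro mult_left_mono) auto
  hence "r * tanh r \<le> r^2 * (tanh y0 / y0)" by (simp add: power2_eq_square mult.assoc)
  hence "sqrt (r * tanh r) \<le> sqrt (r^2 * (tanh y0 / y0))" by simp
  also have "\<dots> = sqrt (r^2) * sqrt (tanh y0 / y0)" by (rule real_sqrt_mult)
  also have "\<dots> = r * sqrt (tanh y0 / y0)" using r0 by simp
  finally have "Fdisp r \<le> r * sqrt (tanh y0 / y0)" using r0 by (simp add: Fdisp_pos)
  hence "gg k r \<le> sqrt (mu0 k) * (r * sqrt (tanh y0 / y0))"
    unfolding gg_def by (intro mult_left_mono sqm0 k)
  thus "gg k r \<le> \<theta> * r" by (simp add: \<theta>_def y0_def mult_ac)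
qed



lemma lam_eq: "lam k s n l \<xi> = \<i> * complex_of_real (of_int n * k + \<xi> + (if s then 1 else -1) * gg k (nkabs k n l \<xi>))"
  by (simp add: lam_def gg_def mult.assoc)

lemma norm_i: "norm (\<i> * complex_of_real x) = \<bar>x\<bar>" by (simp add: norm_mult)

lemma norm_i_diff: "norm (\<i> * complex_of_real x - \<i> * complex_of_real y) = \<bar>x - y\<bar>"
proof -
  have "\<i> * complex_of_real x - \<i> * complex_of_real y = \<i> * complex_of_real (x - y)"
    by (simp add: algebra_simps)
  thus ?thesis by (metis norm_i)
qed

lemma tri: fixes c \<xi> l :: real shows "sqrt ((c + \<xi>)^2 + l^2) \<le> \<bar>c\<bar> + sqrt (\<xi>^2 + l^2)"
proof -
  define \<rho> where "\<rho> = sqrt (\<xi>^2 + l^2)"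
  have r0: "\<rho> \<ge> 0" by (simp add: \<rho>_def)
  have r2: "\<rho>^2 = \<xi>^2 + l^2" by (simp add: \<rho>_def)
  have "\<bar>\<xi>\<bar> \<le> \<rho>" unfolding \<rho>_def by (rule real_le_rsqrt) simp
  hence "c * \<xi> \<le> \<bar>c\<bar> * \<rho>"
    by (metis abs_ge_self abs_mult mult_left_mono abs_ge_zero order_trans)
  hence "(c + \<xi>)^2 + l^2 \<le> (\<bar>c\<bar> + \<rho>)^2"
    using r2 by (simp add: power2_eq_square algebra_simps)
  hence "sqrt ((c + \<xi>)^2 + l^2) \<le> sqrt ((\<bar>c\<bar> + \<rho>)^2)" by (rule real_sqrt_le_mono)
  thus ?thesis using r0 by (simp add: \<rho>_def)
qed

lemma near: assumes k: "k > 0" and r: "0 \<le> \<rho>" "(sqrt (mu0 k) + B) * \<rho> \<le> c0 / 2"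
  and A: "A = (k * (1 - tanh k ^ 2) + tanh k) / (2 * tanh k)"
  and B: "B = (1 - tanh k ^ 2) / (2 * tanh k)"
  and c0: "c0 = sqrt (mu0 k) - A"
  and r': "0 \<le> r'" "r' \<le> k + \<rho>"
  shows "c0 / 2 * \<rho> \<le> k + gg k \<rho> - gg k r'"
proof -
  have "gg k r' \<le> gg k (k + \<rho>)" using k r r' by (intro gg_mono) auto
  also have "\<dots> \<le> k + A * \<rho> + B * \<rho>^2" using L_up[OF k r(1)] by (simp add: A B)
  finally have u: "gg k r' \<le> k + A * \<rho> + B * \<rho>^2" .
  have lo: "sqrt (mu0 k) * (\<rho> * (1 - \<rho>)) \<le> gg k \<rho>" by (rule L_low[OF k r(1)])
  have "c0 / 2 \<le> c0 - (sqrt (mu0 k) + B) * \<rho>" using r by simp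
  hence "\<rho> * (c0 / 2) \<le> \<rho> * (c0 - (sqrt (mu0 k) + B) * \<rho>)" using r by (intro mult_left_mono) auto
  also have "\<dots> = sqrt (mu0 k) * (\<rho> * (1 - \<rho>)) - A * \<rho> - B * \<rho>^2"
    by (simp add: c0 algebra_simps power2_eq_square)
  finally show ?thesis using u lo by (simp add: mult.commute)
qed

lemma far: assumes k: "k > 0" and th: "0 \<le> \<theta>" "\<theta> < 1"
  and g: "\<And>r. r \<ge> 3*k/2 \<Longrightarrow> gg k r \<le> \<theta> * r"
  and a: "\<bar>a\<bar> \<ge> 2*k - \<delta>" and d: "0 \<le> \<delta>" "\<delta> \<le> k/2" "\<delta> \<le> (1-\<theta>)*k/2"
  and l: "\<bar>l\<bar> \<le> \<delta>"
  shows "(1-\<theta>)*k \<le> \<bar>a\<bar> - gg k (sqrt (a^2 + l^2))"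
proof -
  define r where "r = sqrt (a^2 + l^2)"
  have "\<bar>a\<bar> \<le> r" unfolding r_def by (rule real_le_rsqrt) simp
  hence r1: "r \<ge> 3*k/2" using a d by simp
  have "r \<le> \<bar>a\<bar> + sqrt (0^2 + l^2)" using tri[of a 0 l] by (simp add: r_def)
  hence r2: "r \<le> \<bar>a\<bar> + \<delta>" using l by simp
  have "gg k r \<le> \<theta> * r" using g r1 by simp
  also have "\<dots> \<le> \<theta> * (\<bar>a\<bar> + \<delta>)" using r2 th by (intro mult_left_mono) auto
  finally have G: "gg k r \<le> \<theta> * \<bar>a\<bar> + \<theta> * \<delta>" by (simp add: algebra_simps)
  have "(1-\<theta>) * (2*k - \<delta>) \<le> (1-\<theta>) * \<bar>a\<bar>" using th a by (intro mult_left_mono) auto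
  moreover have "\<theta> * \<delta> \<le> \<delta>" using th d by (simp add: mult_left_le_one_le)
  ultimately show ?thesis using G d unfolding r_def[symmetric] by (simp add: algebra_simps)
qed



theorem lemma3p3:
  fixes \<kappa> :: real
  assumes "\<kappa> > 0"
  shows "\<exists>\<delta>1 C1. \<delta>1 > 0 \<and> C1 > 0 \<and>
    (\<forall>l \<xi>. l \<in> {-\<delta>1..\<delta>1} \<and> \<xi> \<in> {-\<delta>1..\<delta>1} \<longrightarrow>
       norm (lam \<kappa> True 0 l \<xi> - lam \<kappa> True (-1) l \<xi>) \<ge> C1 * sqrt (l\<^sup>2 + \<xi>\<^sup>2) \<and>
       norm (lam \<kappa> False 0 l \<xi> - lam \<kappa> False 1 l \<xi>) \<ge> C1 * sqrt (l\<^sup>2 + \<xi>\<^sup>2) \<and>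
       (\<forall>(n::int) (s::bool). (n, s) \<notin> {(0, True), (0, False), (1, False), (-1, True)} \<longrightarrow>
          norm (lam \<kappa> s n l \<xi>) \<ge> C1))"
proof -
  note k = assms
  define t where "t = tanh \<kappa>"
  define m where "m = sqrt (mu0 \<kappa>)"
  define A where "A = (\<kappa> * (1 - tanh \<kappa> ^ 2) + tanh \<kappa>) / (2 * tanh \<kappa>)"
  define B where "B = (1 - tanh \<kappa> ^ 2) / (2 * tanh \<kappa>)"
  define c0 where "c0 = sqrt (mu0 \<kappa>) - A"
  define \<theta> where "\<theta> = sqrt (mu0 \<kappa>) * sqrt (tanh (3*\<kappa>/2) / (3*\<kappa>/2))"
  define \<rho>0 where "\<rho>0 = c0 / (2 * (m + B))"
  define \<delta> where "\<delta> = min (\<kappa>/2) (min ((1-\<theta>)*\<kappa>/2) (\<rho>0/2))"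
  define C where "C = min (c0/2) (min (\<kappa>/2) ((1-\<theta>)*\<kappa>))"
  have t: "0 < t" "t < 1" using k by (auto simp: t_def tanh_real_lt_1)
  have m0: "m \<ge> 0" using sqm0[OF k] by (simp add: m_def)
  have B0: "B \<ge> 0" using t by (simp add: B_def t_def[symmetric] power_le_one)
  have c0: "c0 > 0"
  proof -
    have "m = sqrt (\<kappa> * t) / t" using m_eq[OF k] by (simp add: m_def t_def)
    moreover have "\<kappa> * (1 - t ^ 2) + t < 2 * sqrt (\<kappa> * t)" using key_ineq[OF k] by (simp add: t_def)
    ultimately have "A < m" using t unfolding A_def t_def[symmetric] by (simp add: field_simps)
    thus ?thesis by (simp add: c0_def m_def)
  qed
  have "m > 0" using mu0_pos[OF k] by (simp add: m_def)
  hence mB: "m + B > 0" using B0 by simp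
  have rho0: "\<rho>0 > 0" using c0 mB by (simp add: \<rho>0_def)
  have th: "0 \<le> \<theta>" "\<theta> < 1" "\<And>r. r \<ge> 3*\<kappa>/2 \<Longrightarrow> gg \<kappa> r \<le> \<theta> * r"
    using L_ratio[OF k] by (simp_all add: \<theta>_def)
  have d0: "\<delta> > 0" using k th rho0 by (simp add: \<delta>_def)
  have C0: "C > 0" using k th c0 by (simp add: C_def)
  show ?thesis
  proof (intro exI conjI allI impI)
    show "\<delta> > 0" "C > 0" using d0 C0 by auto
    fix l \<xi> :: real assume lx: "l \<in> {-\<delta>..\<delta>} \<and> \<xi> \<in> {-\<delta>..\<delta>}"
    hence al: "\<bar>l\<bar> \<le> \<delta>" and ax: "\<bar>\<xi>\<bar> \<le> \<delta>" by auto
    define \<rho> where "\<rho> = sqrt (\<xi>^2 + l^2)"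
    have r0: "\<rho> \<ge> 0" by (simp add: \<rho>_def)
    have "\<rho> \<le> \<bar>\<xi>\<bar> + sqrt (0^2 + l^2)" using tri[of \<xi> 0 l] by (simp add: \<rho>_def)
    hence "\<rho> \<le> 2 * \<delta>" using al ax by simp
    hence "\<rho> \<le> \<rho>0" by (simp add: \<delta>_def)
    hence "(m + B) * \<rho> \<le> (m + B) * \<rho>0" using mB by (intro mult_left_mono) auto
    also have "\<dots> = c0 / 2" using mB unfolding \<rho>0_def by (simp add: field_simps)
    finally have rB: "(sqrt (mu0 \<kappa>) + B) * \<rho> \<le> c0 / 2" by (simp add: m_def)
    have rl: "sqrt (l\<^sup>2 + \<xi>\<^sup>2) = \<rho>" by (simp add: \<rho>_def add.commute)
    have CC: "C * \<rho> \<le> c0 / 2 * \<rho>" using r0 by (intro mult_right_mono) (auto simp: C_def)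
    have n0: "nkabs \<kappa> 0 l \<xi> = \<rho>" by (simp add: nkabs_def \<rho>_def)
    have "nkabs \<kappa> (-1) l \<xi> \<le> \<kappa> + \<rho>" using tri[of "-\<kappa>" \<xi> l] k by (simp add: nkabs_def \<rho>_def)
    hence N1: "c0 / 2 * \<rho> \<le> \<kappa> + gg \<kappa> \<rho> - gg \<kappa> (nkabs \<kappa> (-1) l \<xi>)"
      by (intro near[OF k r0 rB A_def B_def c0_def]) (simp_all add: nkabs_def)
    show "norm (lam \<kappa> True 0 l \<xi> - lam \<kappa> True (-1) l \<xi>) \<ge> C * sqrt (l\<^sup>2 + \<xi>\<^sup>2)"
      unfolding lam_eq norm_i_diff rl n0 using N1 CC by simp
    have "nkabs \<kappa> 1 l \<xi> \<le> \<kappa> + \<rho>" using tri[of "\<kappa>" \<xi> l] k by (simp add: nkabs_def \<rho>_def)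
    hence N2: "c0 / 2 * \<rho> \<le> \<kappa> + gg \<kappa> \<rho> - gg \<kappa> (nkabs \<kappa> 1 l \<xi>)"
      by (intro near[OF k r0 rB A_def B_def c0_def]) (simp_all add: nkabs_def)
    show "norm (lam \<kappa> False 0 l \<xi> - lam \<kappa> False 1 l \<xi>) \<ge> C * sqrt (l\<^sup>2 + \<xi>\<^sup>2)"
      unfolding lam_eq norm_i_diff rl n0 using N2 CC by simp
    fix n :: int and s :: bool
    assume ns: "(n, s) \<notin> {(0, True), (0, False), (1, False), (-1, True)}"
    define a where "a = of_int n * \<kappa> + \<xi>"
    define r where "r = nkabs \<kappa> n l \<xi>"
    have r: "r = sqrt (a^2 + l^2)" by (simp add: r_def a_def nkabs_def)
    have g0: "gg \<kappa> r \<ge> 0" using k by (intro gg_nonneg) (auto simp: r_def nkabs_def)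
    have dk: "\<delta> \<le> \<kappa>/2" "\<delta> \<le> (1-\<theta>)*\<kappa>/2" "0 \<le> \<delta>" using d0 by (auto simp: \<delta>_def)
    have F: "\<bar>a\<bar> \<ge> 2*\<kappa> - \<delta> \<Longrightarrow> (1-\<theta>)*\<kappa> \<le> \<bar>a\<bar> - gg \<kappa> r"
      unfolding r by (rule far[OF k th(1,2) th(3) _ dk(3,1,2) al])
    have "C \<le> \<bar>a + (if s then 1 else -1) * gg \<kappa> r\<bar>"
    proof (cases s)
      case True
      hence n: "n \<ge> 1 \<or> n \<le> -2" using ns by auto
      thus ?thesis
      proof
        assume "n \<ge> 1"
        hence "of_int n * \<kappa> \<ge> 1 * \<kappa>" using k by (intro mult_right_mono) auto
        hence "a \<ge> \<kappa> / 2" using ax dk by (simp add: a_def)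
        thus ?thesis using True g0 by (simp add: C_def)
      next
        assume "n \<le> -2"
        hence "of_int n * \<kappa> \<le> (-2) * \<kappa>" using k by (intro mult_right_mono) auto
        hence aa: "a \<le> -(2*\<kappa> - \<delta>)" using ax dk by (simp add: a_def)
        hence "\<bar>a\<bar> \<ge> 2*\<kappa> - \<delta>" by simp
        hence "(1-\<theta>)*\<kappa> \<le> \<bar>a\<bar> - gg \<kappa> r" by (rule F)
        thus ?thesis using True aa dk k by (simp add: C_def)
      qed
    next
      case False
      hence n: "n \<le> -1 \<or> n \<ge> 2" using ns by auto
      thus ?thesis
      proof
        assume "n \<le> -1"
        hence "of_int n * \<kappa> \<le> (-1) * \<kappa>" using k by (intro mult_right_mono) auto
        hence "a \<le> - \<kappa> / 2" using ax dk by (simp add: a_def)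
        thus ?thesis using False g0 by (simp add: C_def)
      next
        assume "n \<ge> 2"
        hence "of_int n * \<kappa> \<ge> 2 * \<kappa>" using k by (intro mult_right_mono) auto
        hence aa: "a \<ge> 2*\<kappa> - \<delta>" using ax dk by (simp add: a_def)
        hence "\<bar>a\<bar> \<ge> 2*\<kappa> - \<delta>" by simp
        hence "(1-\<theta>)*\<kappa> \<le> \<bar>a\<bar> - gg \<kappa> r" by (rule F)
        thus ?thesis using False aa dk k by (simp add: C_def)
      qed
    qed
    thus "norm (lam \<kappa> s n l \<xi>) \<ge> C" unfolding lam_eq norm_i a_def r_def .
  qed
qed


end
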